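(* Let $V$ be a positive dimensional real normed vector space and $\varphi:V\to V$ an invertible linear map. Let $C\subseteq V$ be a convex cone with $\varphi(C)=C$. Suppose all eigenvalues of $\varphi$ are of modulus greater than $1$. Then $(\varphi-\operatorname{id}_V)^{-1}(C)\subseteq C$.
   Context: $(\varphi-\operatorname{id}_V)^{-1}(C)$ denotes the preimage of $C$ under the linear map $\varphi-\operatorname{id}_V$. *)

theory Defs
  imports "HOL-Analysis.Analysis"
begin

text \<open>Eigenvalues of a real linear map f are understood as eigenvalues of its
complexification: mu = a + i b is an eigenvalue iff there is a nonzero
complex vector z = x + i y with f x + i f y = mu (x + i y).\<close>
definition complex_eigenvalue :: "('a::real_vector \<Rightarrow> 'a) \<Rightarrow> complex \<Rightarrow> bool" where
  "complex_eigenvalue f \<mu> \<longleftrightarrow>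
     (\<exists>x y. (x \<noteq> 0 \<or> y \<noteq> 0) \<and>
        f x = Re \<mu> *\<^sub>R x - Im \<mu> *\<^sub>R y \<and>
        f y = Im \<mu> *\<^sub>R x + Re \<mu> *\<^sub>R y)"

end

theory Submission
  imports Defs "Jordan_Normal_Form.Spectral_Radius"
begin

lemma e_inner:
  fixes e :: "nat \<Rightarrow> 'a::euclidean_space"
  assumes "bij_betw e {..<DIM('a)} Basis" "i < DIM('a)" "j < DIM('a)"
  shows "e j \<bullet> e i = (if i = j then 1 else 0)"
proof -
  have "e i \<in> Basis" "e j \<in> Basis" using assms bij_betwE by blast+
  moreover have "e i = e j \<longleftrightarrow> i = j" using assms unfolding bij_betw_def inj_on_def by auto
  ultimately show ?thesis by (auto simp: inner_Basis)
qed

lemma e_repr: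
  fixes e :: "nat \<Rightarrow> 'a::euclidean_space"
  assumes "bij_betw e {..<DIM('a)} Basis"
  shows "x = (\<Sum>j<DIM('a). (x \<bullet> e j) *\<^sub>R e j)"
  using sum.reindex_bij_betw[OF assms, of "\<lambda>b. (x \<bullet> b) *\<^sub>R b"] euclidean_representation[of x]
  by simp

lemma comb_inner:
  fixes e :: "nat \<Rightarrow> 'a::euclidean_space"
  assumes "bij_betw e {..<DIM('a)} Basis" "i < DIM('a)"
  shows "(\<Sum>j<DIM('a). c j *\<^sub>R e j) \<bullet> e i = c i"
proof -
  have "(\<Sum>j<DIM('a). c j *\<^sub>R e j) \<bullet> e i = (\<Sum>j<DIM('a). c j * (if i = j then 1 else 0))"
    unfolding inner_sum_left using e_inner[OF assms(1) assms(2)]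
    by (intro sum.cong) auto
  also have "\<dots> = c i" using assms(2) by (simp add: if_distrib cong: if_cong)
  finally show ?thesis .
qed

lemma e_eqI:
  fixes e :: "nat \<Rightarrow> 'a::euclidean_space"
  assumes "bij_betw e {..<DIM('a)} Basis" "\<And>i. i < DIM('a) \<Longrightarrow> u \<bullet> e i = w \<bullet> e i"
  shows "u = w"
  by (subst e_repr[OF assms(1), of u], subst e_repr[OF assms(1), of w]) (simp add: assms(2))

lemma lin_inner:
  fixes e :: "nat \<Rightarrow> 'a::euclidean_space"
  assumes "linear f"
  shows "f (\<Sum>j<DIM('a). c j *\<^sub>R e j) \<bullet> e i = (\<Sum>j<DIM('a). (f (e j) \<bullet> e i) * c j)"
  by (simp add: linear_sum[OF assms] linear_cmul[OF assms] inner_sum_left mult.commute)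

definition mat_of :: "(nat \<Rightarrow> 'a::euclidean_space) \<Rightarrow> ('a \<Rightarrow> 'a) \<Rightarrow> complex mat" where
  "mat_of e f = mat DIM('a) DIM('a) (\<lambda>(i,j). complex_of_real (f (e j) \<bullet> e i))"

definition coords :: "(nat \<Rightarrow> 'a::euclidean_space) \<Rightarrow> 'a \<Rightarrow> complex Matrix.vec" where
  "coords e x = Matrix.vec DIM('a) (\<lambda>i. complex_of_real (x \<bullet> e i))"

lemma mat_of_carrier[simp]: "mat_of (e::nat \<Rightarrow> 'a) f \<in> carrier_mat DIM('a::euclidean_space) DIM('a)"
  by (simp add: mat_of_def)

lemma coords_carrier[simp]: "coords (e::nat \<Rightarrow> 'a) (x::'a::euclidean_space) \<in> carrier_vec DIM('a)"
  by (simp add: coords_def)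

lemma mat_of_coords:
  fixes e :: "nat \<Rightarrow> 'a::euclidean_space"
  assumes "bij_betw e {..<DIM('a)} Basis" "linear f"
  shows "mat_of e f *\<^sub>v coords e x = coords e (f x)"
proof (rule eq_vecI)
  fix i assume i: "i < dim_vec (coords e (f x))"
  hence i': "i < DIM('a)" by (simp add: coords_def)
  have "f x \<bullet> e i = (\<Sum>j<DIM('a). (f (e j) \<bullet> e i) * (x \<bullet> e j))"
    using lin_inner[OF assms(2), of "\<lambda>j. x \<bullet> e j" e i] e_repr[OF assms(1), of x] by simp
  then show "(mat_of e f *\<^sub>v coords e x) $ i = coords e (f x) $ i"
    using i' by (simp add: mat_of_def coords_def scalar_prod_def lessThan_atLeast0)
qed (simp add: mat_of_def coords_def)

lemma mat_of_pow_coords: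
  fixes e :: "nat \<Rightarrow> 'a::euclidean_space"
  assumes "bij_betw e {..<DIM('a)} Basis" "linear f"
  shows "mat_of e f ^\<^sub>m k *\<^sub>v coords e x = coords e ((f ^^ k) x)"
proof (induction k arbitrary: x)
  case 0
  have "dim_row (mat_of e f) = DIM('a)" by (simp add: mat_of_def)
  then show ?case by simp
next
  case (Suc k)
  have "mat_of e f ^\<^sub>m Suc k *\<^sub>v coords e x = mat_of e f ^\<^sub>m k *\<^sub>v (mat_of e f *\<^sub>v coords e x)"
    by (simp add: assoc_mult_mat_vec[of _ "DIM('a)" "DIM('a)" _ "DIM('a)"] pow_carrier_mat)
  also have "\<dots> = coords e ((f ^^ k) (f x))" by (simp add: mat_of_coords[OF assms] Suc)
  finally show ?case by (metis funpow_Suc_right comp_apply)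
qed

lemma mat_eig:
  fixes e :: "nat \<Rightarrow> 'a::euclidean_space"
  assumes e: "bij_betw e {..<DIM('a)} Basis" and f: "linear f" and ev: "eigenvalue (mat_of e f) l"
  shows "complex_eigenvalue f l"
proof -
  obtain z where z: "z \<in> carrier_vec DIM('a)" "z \<noteq> 0\<^sub>v DIM('a)" "mat_of e f *\<^sub>v z = l \<cdot>\<^sub>v z"
    using ev unfolding eigenvalue_def eigenvector_def by (auto simp: mat_of_def)
  define x where "x = (\<Sum>j<DIM('a). Re (z $ j) *\<^sub>R e j)"
  define y where "y = (\<Sum>j<DIM('a). Im (z $ j) *\<^sub>R e j)"
  have xi: "x \<bullet> e i = Re (z $ i)" if "i < DIM('a)" for i
    unfolding x_def using comb_inner[OF e that] .
  have yi: "y \<bullet> e i = Im (z $ i)" if "i < DIM('a)" for i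
    unfolding y_def using comb_inner[OF e that] .
  have row: "(\<Sum>j<DIM('a). complex_of_real (f (e j) \<bullet> e i) * z $ j) = l * z $ i" if i: "i < DIM('a)" for i
  proof -
    have "(mat_of e f *\<^sub>v z) $ i = (l \<cdot>\<^sub>v z) $ i" using z(3) by simp
    thus ?thesis using i z(1) by (simp add: mat_of_def scalar_prod_def lessThan_atLeast0)
  qed
  have fx: "f x = Re l *\<^sub>R x - Im l *\<^sub>R y"
  proof (rule e_eqI[OF e])
    fix i assume i: "i < DIM('a)"
    have "f x \<bullet> e i = (\<Sum>j<DIM('a). (f (e j) \<bullet> e i) * Re (z $ j))"
      unfolding x_def by (rule lin_inner[OF f])
    also have "\<dots> = Re (\<Sum>j<DIM('a). complex_of_real (f (e j) \<bullet> e i) * z $ j)"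
      by (simp add: Re_sum)
    also have "\<dots> = Re (l * z $ i)" using row[OF i] by simp
    also have "\<dots> = (Re l *\<^sub>R x - Im l *\<^sub>R y) \<bullet> e i"
      using xi[OF i] yi[OF i] by (simp add: inner_diff_left)
    finally show "f x \<bullet> e i = (Re l *\<^sub>R x - Im l *\<^sub>R y) \<bullet> e i" .
  qed
  have fy: "f y = Im l *\<^sub>R x + Re l *\<^sub>R y"
  proof (rule e_eqI[OF e])
    fix i assume i: "i < DIM('a)"
    have "f y \<bullet> e i = (\<Sum>j<DIM('a). (f (e j) \<bullet> e i) * Im (z $ j))"
      unfolding y_def by (rule lin_inner[OF f])
    also have "\<dots> = Im (\<Sum>j<DIM('a). complex_of_real (f (e j) \<bullet> e i) * z $ j)"
      by (simp add: Im_sum)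
    also have "\<dots> = Im (l * z $ i)" using row[OF i] by simp
    also have "\<dots> = (Im l *\<^sub>R x + Re l *\<^sub>R y) \<bullet> e i"
      using xi[OF i] yi[OF i] by (simp add: inner_add_left algebra_simps)
    finally show "f y \<bullet> e i = (Im l *\<^sub>R x + Re l *\<^sub>R y) \<bullet> e i" .
  qed
  obtain i where i: "i < DIM('a)" "z $ i \<noteq> 0"
    using z(1,2) by (metis carrier_vecD eq_vecI index_zero_vec(1,2))
  have "x \<noteq> 0 \<or> y \<noteq> 0"
  proof (rule ccontr)
    assume "\<not> (x \<noteq> 0 \<or> y \<noteq> 0)"
    hence "Re (z $ i) = 0" "Im (z $ i) = 0" using xi[OF i(1)] yi[OF i(1)] by auto
    thus False using i(2) by (simp add: complex_eq_iff)
  qed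
  thus ?thesis unfolding complex_eigenvalue_def using fx fy by blast
qed


lemma jnf_bound:
  fixes B :: "complex mat"
  assumes B: "B \<in> carrier_mat n n" and ev: "\<And>l. eigenvalue B l \<Longrightarrow> cmod l < 1"
  shows "\<exists>c. \<forall>k. norm_bound (B ^\<^sub>m k) c"
proof -
  from char_poly_factorized[OF B] obtain as where cA: "char_poly B = (\<Prod>a\<leftarrow>as. [:- a, 1:])" by auto
  have lt: "norm a < 1" if "a \<in> set as" for a
  proof -
    have "poly (char_poly B) a = 0" unfolding cA by (rule linear_poly_root[OF that])
    hence "eigenvalue B a" using eigenvalue_root_char_poly[OF B] by simp
    thus ?thesis using ev by simp
  qed
  have "\<exists>c1 c2. \<forall>k. norm_bound (B ^\<^sub>m k) (c1 + c2 * of_nat k ^ (0 - 1))"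
    by (rule factored_char_poly_norm_bound_cof[OF B cA]) (use lt in force)+
  thus ?thesis by auto
qed

lemma pow_tendsto_zero:
  fixes \<psi> :: "'a::euclidean_space \<Rightarrow> 'a"
  assumes lin: "linear \<psi>" and ev: "\<And>\<mu>. complex_eigenvalue \<psi> \<mu> \<Longrightarrow> cmod \<mu> < 1"
  shows "((\<lambda>k. (\<psi> ^^ k) x) \<longlongrightarrow> 0) sequentially"
proof -
  obtain e :: "nat \<Rightarrow> 'a" where e: "bij_betw e {..<DIM('a)} Basis"
    using ex_bij_betw_nat_finite[of "Basis :: 'a set"] by (auto simp: lessThan_atLeast0)
  define A where "A = mat_of e \<psi>"
  have A: "A \<in> carrier_mat DIM('a) DIM('a)" unfolding A_def by simp
  define \<rho> where "\<rho> = Max (insert 0 (cmod ` spectrum A))"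
  have fin: "finite (insert 0 (cmod ` spectrum A))" using card_finite_spectrum[OF A] by simp
  have rho_ge: "cmod l \<le> \<rho>" if "eigenvalue A l" for l
    unfolding \<rho>_def using fin that by (intro Max_ge) (auto simp: spectrum_def)
  have rho0: "0 \<le> \<rho>" unfolding \<rho>_def using fin by (intro Max_ge) auto
  have rho1: "\<rho> < 1"
    unfolding \<rho>_def using fin
  proof (subst Max_less_iff)
    show "\<forall>a\<in>insert 0 (cmod ` spectrum A). a < 1"
      using ev mat_eig[OF e lin] by (auto simp: spectrum_def A_def)
  qed auto
  define r where "r = (1 + \<rho>) / 2"
  have r: "0 < r" "r < 1" "\<rho> < r" using rho0 rho1 by (auto simp: r_def)
  define \<psi>' where "\<psi>' = (\<lambda>x. (1 / r) *\<^sub>R \<psi> x)"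
  have lin': "linear \<psi>'" 
  proof (rule linearI)
    show "\<psi>' (x + y) = \<psi>' x + \<psi>' y" for x y by (simp add: \<psi>'_def linear_add[OF lin] scaleR_add_right)
    show "\<psi>' (c *\<^sub>R x) = c *\<^sub>R \<psi>' x" for c x by (simp add: \<psi>'_def linear_cmul[OF lin])
  qed
  define B where "B = mat_of e \<psi>'"
  have B: "B \<in> carrier_mat DIM('a) DIM('a)" unfolding B_def by simp
  have AB: "A *\<^sub>v z = complex_of_real r \<cdot>\<^sub>v (B *\<^sub>v z)" if z: "z \<in> carrier_vec DIM('a)" for z
  proof (rule eq_vecI)
    fix i assume "i < dim_vec (complex_of_real r \<cdot>\<^sub>v (B *\<^sub>v z))"
    hence i: "i < DIM('a)" using B by simp
    show "(A *\<^sub>v z) $ i = (complex_of_real r \<cdot>\<^sub>v (B *\<^sub>v z)) $ i"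
      using i z r(1) by (simp add: A_def B_def \<psi>'_def mat_of_def scalar_prod_def sum_distrib_left
          inner_scaleR_left)
  qed (use A B in simp)
  have evB: "cmod l < 1" if evl: "eigenvalue B l" for l
  proof -
    obtain z where z: "z \<in> carrier_vec DIM('a)" "z \<noteq> 0\<^sub>v DIM('a)" "B *\<^sub>v z = l \<cdot>\<^sub>v z"
      using evl B unfolding eigenvalue_def eigenvector_def by auto
    have "A *\<^sub>v z = (complex_of_real r * l) \<cdot>\<^sub>v z"
      using AB[OF z(1)] z(3) by (simp add: smult_smult_assoc)
    hence "eigenvalue A (complex_of_real r * l)"
      unfolding eigenvalue_def eigenvector_def using z A by auto
    hence "cmod (complex_of_real r * l) \<le> \<rho>" by (rule rho_ge)
    hence "r * cmod l \<le> \<rho>" using r by (simp add: norm_mult)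
    hence "r * cmod l < r * 1" using r by linarith
    thus ?thesis using r(1) mult_less_cancel_left_pos by blast
  qed
  obtain c where c: "\<And>k. norm_bound (B ^\<^sub>m k) c" using jnf_bound[OF B evB] by blast
  have scale: "(\<psi>' ^^ k) y = (1 / r) ^ k *\<^sub>R (\<psi> ^^ k) y" for k y
    by (induction k) (simp_all add: \<psi>'_def linear_cmul[OF lin])
  define K where "K = (\<Sum>j<DIM('a). \<bar>x \<bullet> e j\<bar>)"
  have bnd: "\<bar>(\<psi> ^^ k) x \<bullet> e i\<bar> \<le> r ^ k * (c * K)" if i: "i < DIM('a)" for i k
  proof -
    have "coords e ((\<psi>' ^^ k) x) $ i = (B ^\<^sub>m k *\<^sub>v coords e x) $ i"
      using mat_of_pow_coords[OF e lin', of k x] by (simp add: B_def)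
    also have "\<dots> = (\<Sum>j<DIM('a). (B ^\<^sub>m k) $$ (i, j) * complex_of_real (x \<bullet> e j))"
      using i B by (simp add: coords_def scalar_prod_def lessThan_atLeast0)
    finally have eq: "complex_of_real ((\<psi>' ^^ k) x \<bullet> e i) = \<dots>" using i by (simp add: coords_def)
    have "\<bar>(\<psi>' ^^ k) x \<bullet> e i\<bar> = cmod (\<Sum>j<DIM('a). (B ^\<^sub>m k) $$ (i, j) * complex_of_real (x \<bullet> e j))"
      using eq by (metis norm_of_real)
    also have "\<dots> \<le> (\<Sum>j<DIM('a). cmod ((B ^\<^sub>m k) $$ (i, j) * complex_of_real (x \<bullet> e j)))"
      by (rule norm_sum)
    also have "\<dots> \<le> (\<Sum>j<DIM('a). c * \<bar>x \<bullet> e j\<bar>)"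
    proof (rule sum_mono)
      fix j assume "j \<in> {..<DIM('a)}"
      hence "cmod ((B ^\<^sub>m k) $$ (i, j)) \<le> c"
        using c[of k] i B unfolding norm_bound_def by (auto simp: pow_carrier_mat)
      thus "cmod ((B ^\<^sub>m k) $$ (i, j) * complex_of_real (x \<bullet> e j)) \<le> c * \<bar>x \<bullet> e j\<bar>"
        by (simp add: norm_mult mult_right_mono)
    qed
    also have "\<dots> = c * K" by (simp add: K_def sum_distrib_left)
    finally have "\<bar>(\<psi>' ^^ k) x \<bullet> e i\<bar> \<le> c * K" .
    hence "(1 / r) ^ k * \<bar>(\<psi> ^^ k) x \<bullet> e i\<bar> \<le> c * K"
      using r by (simp add: scale abs_mult)
    hence "r ^ k * ((1 / r) ^ k * \<bar>(\<psi> ^^ k) x \<bullet> e i\<bar>) \<le> r ^ k * (c * K)"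
      using r by (intro mult_left_mono) auto
    thus ?thesis using r by (simp add: power_one_over field_simps)
  qed
  show ?thesis
  proof (subst tendsto_componentwise_iff, intro ballI)
    fix b :: 'a assume "b \<in> Basis"
    then obtain i where i: "i < DIM('a)" "b = e i" using e by (metis bij_betw_iff_bijections lessThan_iff)
    have "((\<lambda>k. r ^ k * (c * K)) \<longlongrightarrow> 0) sequentially"
      using r by (intro tendsto_mult_left_zero LIMSEQ_power_zero) auto
    hence "((\<lambda>k. (\<psi> ^^ k) x \<bullet> e i) \<longlongrightarrow> 0) sequentially"
      by (rule Lim_null_comparison[rotated]) (use bnd[OF i(1)] in auto)
    thus "((\<lambda>k. (\<psi> ^^ k) x \<bullet> b) \<longlongrightarrow> 0 \<bullet> b) sequentially" using i by simp
  qed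
qed


lemma cone_sum:
  assumes "convex_cone C" "finite I" "\<And>i. i \<in> I \<Longrightarrow> f i \<in> C"
  shows "sum f I \<in> C"
  using assms(2,3)
proof (induction I rule: finite_induct)
  case empty
  then show ?case using convex_cone_contains_0[OF assms(1)] by simp
next
  case (insert x F)
  then show ?case using convex_cone_add[OF assms(1)] by simp
qed

theorem proposition3p2:
  fixes \<phi> :: "'a::euclidean_space \<Rightarrow> 'a" and C :: "'a set"
  assumes "linear \<phi>" and "bij \<phi>"
    and "convex_cone C" and "\<phi> ` C = C"
    and "\<And>\<mu>. complex_eigenvalue \<phi> \<mu> \<Longrightarrow> cmod \<mu> > 1"
  shows "(\<lambda>v. \<phi> v - v) -` C \<subseteq> C"
proof
  note lin = assms(1) and cc = assms(3)
  obtain \<psi> where lpsi: "linear \<psi>" and psiphi: "\<psi> \<circ> \<phi> = id"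
    using linear_injective_left_inverse[OF lin] assms(2) bij_is_inj by blast
  have pp: "\<psi> (\<phi> x) = x" for x using psiphi by (metis comp_apply id_apply)
  have pp2: "\<phi> (\<psi> x) = x" for x
  proof -
    obtain y where "x = \<phi> y" using assms(2) by (metis bij_pointE)
    thus ?thesis using pp by simp
  qed
  have psiC: "\<psi> x \<in> C" if xC: "x \<in> C" for x
  proof -
    obtain y where "y \<in> C" "x = \<phi> y" using xC assms(4) by auto
    thus ?thesis using pp by simp
  qed
  have powC: "(\<psi> ^^ k) x \<in> C" if "x \<in> C" for x k
    using that by (induction k) (auto intro: psiC)
  have evpsi: "cmod \<mu> < 1" if ev: "complex_eigenvalue \<psi> \<mu>" for \<mu>
  proof -
    obtain x y where xy: "x \<noteq> 0 \<or> y \<noteq> 0" "\<psi> x = Re \<mu> *\<^sub>R x - Im \<mu> *\<^sub>R y" "\<psi> y = Im \<mu> *\<^sub>R x + Re \<mu> *\<^sub>R y"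
      using ev unfolding complex_eigenvalue_def by blast
    define a where "a = Re \<mu>"
    define b where "b = Im \<mu>"
    have ex: "x = a *\<^sub>R \<phi> x - b *\<^sub>R \<phi> y"
      using arg_cong[OF xy(2), of \<phi>] by (simp add: pp2 linear_diff[OF lin] linear_cmul[OF lin] a_def b_def)
    have ey: "y = b *\<^sub>R \<phi> x + a *\<^sub>R \<phi> y"
      using arg_cong[OF xy(3), of \<phi>] by (simp add: pp2 linear_add[OF lin] linear_cmul[OF lin] a_def b_def)
    have d1: "a *\<^sub>R x + b *\<^sub>R y = (a\<^sup>2 + b\<^sup>2) *\<^sub>R \<phi> x"
      by (subst ex, subst ey) (simp add: algebra_simps power2_eq_square)
    have d2: "a *\<^sub>R y - b *\<^sub>R x = (a\<^sup>2 + b\<^sup>2) *\<^sub>R \<phi> y"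
      by (subst ex, subst ey) (simp add: algebra_simps power2_eq_square)
    have "\<mu> \<noteq> 0"
    proof
      assume "\<mu> = 0"
      hence "\<psi> x = 0" "\<psi> y = 0" using xy by auto
      hence "x = 0" "y = 0" using pp2 linear_0[OF lin] by metis+
      thus False using xy(1) by simp
    qed
    hence d: "a\<^sup>2 + b\<^sup>2 \<noteq> 0" unfolding a_def b_def by (simp add: complex_eq_iff)
    have "complex_eigenvalue \<phi> (1 / \<mu>)"
      unfolding complex_eigenvalue_def
    proof (intro exI conjI)
      show "x \<noteq> 0 \<or> y \<noteq> 0" by fact
      have "Re (1/\<mu>) = a / (a\<^sup>2 + b\<^sup>2)" "Im (1/\<mu>) = - b / (a\<^sup>2 + b\<^sup>2)"
        by (simp_all add: a_def b_def Re_divide Im_divide complex_norm_square[symmetric] cmod_power2)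
      moreover have "\<phi> x = (a / (a\<^sup>2 + b\<^sup>2)) *\<^sub>R x - (- b / (a\<^sup>2 + b\<^sup>2)) *\<^sub>R y"
        using arg_cong[OF d1, of "\<lambda>v. (1 / (a\<^sup>2 + b\<^sup>2)) *\<^sub>R v"] d by (simp add: divide_inverse scaleR_add_right mult.commute)
      moreover have "\<phi> y = (- b / (a\<^sup>2 + b\<^sup>2)) *\<^sub>R x + (a / (a\<^sup>2 + b\<^sup>2)) *\<^sub>R y"
        using arg_cong[OF d2, of "\<lambda>v. (1 / (a\<^sup>2 + b\<^sup>2)) *\<^sub>R v"] d by (simp add: divide_inverse scaleR_diff_right mult.commute)
      ultimately show "\<phi> x = Re (1/\<mu>) *\<^sub>R x - Im (1/\<mu>) *\<^sub>R y" "\<phi> y = Im (1/\<mu>) *\<^sub>R x + Re (1/\<mu>) *\<^sub>R y"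
        by simp_all
    qed
    hence "cmod (1 / \<mu>) > 1" by (rule assms(5))
    thus ?thesis using \<open>\<mu> \<noteq> 0\<close> by (simp add: norm_divide divide_simps split: if_splits)
  qed
  have tend: "((\<lambda>k. (\<psi> ^^ k) x) \<longlongrightarrow> 0) sequentially" for x
    by (rule pow_tendsto_zero[OF lpsi evpsi])
  fix v assume "v \<in> (\<lambda>v. \<phi> v - v) -` C"
  hence wC: "\<phi> v - v \<in> C" by simp
  define w where "w = \<phi> v - v"
  have v1: "v = \<psi> w + \<psi> v"
    using pp[of v] by (simp add: w_def linear_diff[OF lpsi])
  have step: "(\<psi> ^^ m) v = (\<psi> ^^ Suc m) w + (\<psi> ^^ Suc m) v" for m
  proof (induction m)
    case 0
    have "(\<psi> ^^ 0) v = v" "(\<psi> ^^ Suc 0) w = \<psi> w" "(\<psi> ^^ Suc 0) v = \<psi> v" by simp_all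
    then show ?case by (simp only:) (rule v1)
  next
    case (Suc m)
    have "(\<psi> ^^ Suc m) v = \<psi> ((\<psi> ^^ m) v)" by simp
    also have "\<dots> = \<psi> ((\<psi> ^^ Suc m) w) + \<psi> ((\<psi> ^^ Suc m) v)" by (subst Suc) (simp add: linear_add[OF lpsi])
    finally show ?case by simp
  qed
  define S where "S m = (\<Sum>k\<in>{1..m}. (\<psi> ^^ k) w)" for m
  have rec: "v = S m + (\<psi> ^^ m) v" for m
  proof (induction m)
    case 0 then show ?case by (simp add: S_def)
  next
    case (Suc m)
    have "S (Suc m) + (\<psi> ^^ Suc m) v = S m + ((\<psi> ^^ Suc m) w + (\<psi> ^^ Suc m) v)"
      by (simp add: S_def algebra_simps)
    also have "\<dots> = S m + (\<psi> ^^ m) v" by (simp only: step[of m, symmetric])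
    also have "\<dots> = v" by (rule Suc.IH[symmetric])
    finally show ?case by (rule sym)
  qed
  define G where "G = range (\<lambda>k. (\<psi> ^^ Suc k) w)"
  have SG: "S m \<in> span G" for m
    unfolding S_def
  proof (intro span_sum)
    fix k assume "k \<in> {1..m}"
    hence "(\<psi> ^^ k) w = (\<psi> ^^ Suc (k - 1)) w" by simp
    thus "(\<psi> ^^ k) w \<in> span G" unfolding G_def by (metis rangeI span_base)
  qed
  have "(S \<longlongrightarrow> v) sequentially"
  proof -
    have "S = (\<lambda>m. v - (\<psi> ^^ m) v)" using rec by (metis add_diff_cancel_right')
    moreover have "((\<lambda>m. v - (\<psi> ^^ m) v) \<longlongrightarrow> v - 0) sequentially"
      by (intro tendsto_diff tendsto_const tend)
    ultimately show ?thesis by simp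
  qed
  hence vG: "v \<in> span G"
    using closed_sequentially[OF closed_span] SG by auto
  obtain B where BG: "B \<subseteq> G" and indB: "independent B" and GB: "G \<subseteq> span B"
    by (rule maximal_independent_subset)
  have finB: "finite B" using independent_bound[OF indB] by simp
  have spanGB: "span G \<subseteq> span B" using GB by (simp add: span_minimal)
  have TB: "(\<psi> ^^ m) v \<in> span B" for m
  proof -
    have "(\<psi> ^^ m) v = v - S m" using rec[of m] by (metis add_diff_cancel_left')
    thus ?thesis using vG SG spanGB span_diff by (metis subsetD)
  qed
  define idx where "idx b = (SOME k. b = (\<psi> ^^ Suc k) w)" for b
  have idx: "b = (\<psi> ^^ Suc (idx b)) w" if "b \<in> B" for b
  proof -
    have "\<exists>k. b = (\<psi> ^^ Suc k) w" using that BG unfolding G_def by auto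
    thus ?thesis unfolding idx_def by (rule someI_ex)
  qed
  define B' where "B' = extend_basis B"
  have indB': "independent B'" and spanB': "span B' = UNIV" and BB': "B \<subseteq> B'"
    using indB by (simp_all add: B'_def independent_extend_basis extend_basis_superset)
  define coef where "coef m b = representation B' ((\<psi> ^^ m) v) b" for m b
  have coef_tend: "((\<lambda>m. coef m b) \<longlongrightarrow> 0) sequentially" for b
  proof -
    have bl: "bounded_linear (\<lambda>x. representation B' x b)"
      by (rule bounded_linear_representation[OF indB' spanB'])
    have "((\<lambda>m. representation B' ((\<psi> ^^ m) v) b) \<longlongrightarrow> representation B' 0 b) sequentially"
      by (rule bounded_linear.tendsto[OF bl tend])
    thus ?thesis unfolding coef_def using linear_0[OF bounded_linear.linear[OF bl]] by simp
  qed
  have ev1: "\<forall>\<^sub>F m in sequentially. \<forall>b\<in>B. norm (coef m b) < 1"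
  proof (rule eventually_ball_finite[OF finB], intro ballI)
    fix b
    have "((\<lambda>m. norm (coef m b)) \<longlongrightarrow> 0) sequentially" using coef_tend tendsto_norm_zero by blast
    thus "\<forall>\<^sub>F m in sequentially. norm (coef m b) < 1" by (rule order_tendstoD) simp
  qed
  have ev2: "\<forall>\<^sub>F m in sequentially. \<forall>b\<in>B. Suc (idx b) \<le> m"
    by (rule eventually_ball_finite[OF finB]) (auto intro: eventually_ge_at_top)
  obtain m where m1: "\<forall>b\<in>B. norm (coef m b) < 1" and m2: "\<forall>b\<in>B. Suc (idx b) \<le> m"
    using eventually_happens'[OF sequentially_bot eventually_conj[OF ev1 ev2]] by blast
  have Trep: "(\<psi> ^^ m) v = (\<Sum>b\<in>B. coef m b *\<^sub>R b)"
  proof -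
    have "representation B' ((\<psi> ^^ m) v) = representation B ((\<psi> ^^ m) v)"
      by (rule representation_extend[OF indB' TB BB'])
    hence "(\<Sum>b\<in>B. coef m b *\<^sub>R b) = (\<Sum>b\<in>B. representation B ((\<psi> ^^ m) v) b *\<^sub>R b)"
      unfolding coef_def by simp
    also have "\<dots> = (\<psi> ^^ m) v" by (rule sum_representation_eq[OF indB TB finB order_refl])
    finally show ?thesis by simp
  qed
  define I where "I = (\<lambda>b. Suc (idx b)) ` B"
  have injI: "inj_on (\<lambda>b. Suc (idx b)) B"
    by (rule inj_onI) (metis idx)
  have Isub: "I \<subseteq> {1..m}" using m2 unfolding I_def by auto
  have SI: "S m = (\<Sum>k\<in>{1..m} - I. (\<psi> ^^ k) w) + (\<Sum>b\<in>B. b)"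
  proof -
    have "(\<Sum>k\<in>I. (\<psi> ^^ k) w) = (\<Sum>b\<in>B. (\<psi> ^^ Suc (idx b)) w)"
      unfolding I_def by (rule sum.reindex[OF injI, unfolded comp_def])
    also have "\<dots> = (\<Sum>b\<in>B. b)" using idx by (intro sum.cong) auto
    finally have "(\<Sum>k\<in>I. (\<psi> ^^ k) w) = (\<Sum>b\<in>B. b)" .
    thus ?thesis unfolding S_def using sum.subset_diff[OF Isub, of "\<lambda>k. (\<psi> ^^ k) w"] by simp
  qed
  have "v = S m + (\<psi> ^^ m) v" by (rule rec)
  also have "\<dots> = (\<Sum>k\<in>{1..m} - I. (\<psi> ^^ k) w) + ((\<Sum>b\<in>B. b) + (\<Sum>b\<in>B. coef m b *\<^sub>R b))"
    unfolding SI Trep by (simp only: add.assoc)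
  also have "\<dots> = (\<Sum>k\<in>{1..m} - I. (\<psi> ^^ k) w) + (\<Sum>b\<in>B. (1 + coef m b) *\<^sub>R b)"
    by (simp add: scaleR_add_left sum.distrib)
  finally have "v = (\<Sum>k\<in>{1..m} - I. (\<psi> ^^ k) w) + (\<Sum>b\<in>B. (1 + coef m b) *\<^sub>R b)" .
  moreover have "(\<Sum>k\<in>{1..m} - I. (\<psi> ^^ k) w) \<in> C"
    by (rule cone_sum[OF cc]) (use powC wC w_def in auto)
  moreover have "(\<Sum>b\<in>B. (1 + coef m b) *\<^sub>R b) \<in> C"
  proof (rule cone_sum[OF cc finB])
    fix b assume b: "b \<in> B"
    have "b \<in> C" using idx[OF b] powC wC w_def by metis
    moreover have "0 \<le> 1 + coef m b" using m1 b by auto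
    ultimately show "(1 + coef m b) *\<^sub>R b \<in> C" by (rule convex_cone_scaleR[OF cc, rotated])
  qed
  ultimately show "v \<in> C" using convex_cone_add[OF cc] by metis
qed

end
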